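(* Let $p$ be a prime and let $a_{g-1},\dots,a_0$ be integers with $|a_{g-1}p|>2g$ and $a_0$ not divisible by $p$. Set $q(x)=x^g+a_{g-1}px^{g-1}+\cdots+a_1px+a_0p$. Then $\mathrm{sym}(q)(x)=x^g\,q\!\left(x+\frac1x\right)$ satisfies the homological criterion, i.e. it is symplectically irreducible, is not a cyclotomic polynomial, and is not a polynomial in $x^k$ for any $k>1$.
   Context: A symplectic polynomial is an even-degree integer polynomial that is monic and palindromic (equivalently, the characteristic polynomial of an element of $\mathrm{Sp}(2n,\mathbb{Z})$). A symplectic polynomial is symplectically irreducible if it is not a product of two nontrivial symplectic polynomials. A cyclotomic polynomial is the minimal polynomial over $\mathbb{Q}$ of a primitive $n$-th root of unity. *)

theory Defs
  imports "HOL-Computational_Algebra.Polynomial_Factorial"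
begin

definition symplectic_poly :: "int poly \<Rightarrow> bool" where
  "symplectic_poly f \<longleftrightarrow> even (degree f) \<and> lead_coeff f = 1 \<and> reflect_poly f = f"

definition symp_irreducible :: "int poly \<Rightarrow> bool" where
  "symp_irreducible f \<longleftrightarrow> symplectic_poly f \<and>
     \<not> (\<exists>g h. symplectic_poly g \<and> symplectic_poly h \<and> degree g > 0 \<and> degree h > 0 \<and> f = g * h)"

text \<open>Cyclotomic: (integer) polynomial equal to the minimal polynomial over Q of a primitive
  n-th root of unity, i.e. monic, irreducible over Q, with such a root.\<close>
definition cyclotomic_poly :: "int poly \<Rightarrow> bool" where
  "cyclotomic_poly f \<longleftrightarrow> (\<exists>n::nat. n > 0 \<and> (\<exists>z::complex. z ^ n = 1 \<and> (\<forall>k. 0 < k \<and> k < n \<longrightarrow> z ^ k \<noteq> 1) \<and>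
      lead_coeff f = 1 \<and> irreducible (map_poly (of_int :: int \<Rightarrow> rat) f) \<and>
      poly (map_poly of_int f) z = 0))"

text \<open>sym(q)(x) = x^g q(x + 1/x), where g = deg q, as a polynomial:
  sum of q_i (x^2+1)^i x^(g-i).\<close>
definition sym_poly :: "int poly \<Rightarrow> int poly" where
  "sym_poly q = (\<Sum>i\<le>degree q. smult (coeff q i) ([:1, 0, 1:] ^ i * monom 1 (degree q - i)))"

end

theory Submission
  imports Defs "HOL-Computational_Algebra.Euclidean_Algorithm" "HOL-Computational_Algebra.Field_as_Ring"
    "HOL-Computational_Algebra.Fundamental_Theorem_Algebra"
begin


definition Sp :: "nat \<Rightarrow> int poly \<Rightarrow> int poly" where
  "Sp m R = (\<Sum>i\<le>m. smult (coeff R i) ([:1, 0, 1:] ^ i * monom 1 (m - i)))"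

lemma sym_poly_Sp: "sym_poly q = Sp (degree q) q"
  by (simp add: sym_poly_def Sp_def)

lemma mp_add: "map_poly (of_int::int\<Rightarrow>'a::comm_ring_1) (f+g) = map_poly of_int f + map_poly of_int g"
  by (rule poly_eqI) (simp add: coeff_map_poly)
lemma mp_diff: "map_poly (of_int::int\<Rightarrow>'a::comm_ring_1) (f-g) = map_poly of_int f - map_poly of_int g"
  by (rule poly_eqI) (simp add: coeff_map_poly)
lemma mp_mult: "map_poly (of_int::int\<Rightarrow>'a::comm_ring_1) (f*g) = map_poly of_int f * map_poly of_int g"
  by (rule poly_eqI) (simp add: coeff_map_poly coeff_mult)
lemma mp_sum: "map_poly (of_int::int\<Rightarrow>'a::comm_ring_1) (sum f A) = (\<Sum>i\<in>A. map_poly of_int (f i))"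
  by (induction A rule: infinite_finite_induct) (auto simp: mp_add)
lemma mp_power: "map_poly (of_int::int\<Rightarrow>'a::comm_ring_1) (f^n) = (map_poly of_int f)^n"
  by (induction n) (auto simp: mp_mult)

lemma ratmp_add: "map_poly (of_rat::rat\<Rightarrow>'a::field_char_0) (f+g) = map_poly of_rat f + map_poly of_rat g"
  by (rule poly_eqI) (simp add: coeff_map_poly of_rat_add)
lemma ratmp_mult: "map_poly (of_rat::rat\<Rightarrow>'a::field_char_0) (f*g) = map_poly of_rat f * map_poly of_rat g"
  by (rule poly_eqI) (simp add: coeff_map_poly coeff_mult of_rat_sum of_rat_mult)

lemma ev_add: "poly (map_poly of_int (f+g)) (x::'a::comm_ring_1) = poly (map_poly of_int f) x + poly (map_poly of_int g) x"
  by (simp add: mp_add)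
lemma ev_diff: "poly (map_poly of_int (f-g)) (x::'a::comm_ring_1) = poly (map_poly of_int f) x - poly (map_poly of_int g) x"
  by (simp add: mp_diff)
lemma ev_mult: "poly (map_poly of_int (f*g)) (x::'a::comm_ring_1) = poly (map_poly of_int f) x * poly (map_poly of_int g) x"
  by (simp add: mp_mult)
lemma ev_sum: "poly (map_poly of_int (sum f A)) (x::'a::comm_ring_1) = (\<Sum>i\<in>A. poly (map_poly of_int (f i)) x)"
  by (simp add: mp_sum poly_sum)
lemma ev_power: "poly (map_poly of_int (f^n)) (x::'a::comm_ring_1) = poly (map_poly of_int f) x ^ n"
  by (simp add: mp_power)
lemma ev_smult: "poly (map_poly of_int (smult c f)) (x::'a::comm_ring_1) = of_int c * poly (map_poly of_int f) x"
  by (simp add: map_poly_smult)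
lemma ev_monom: "poly (map_poly of_int (monom c n)) (x::'a::comm_ring_1) = of_int c * x ^ n"
  by (simp add: map_poly_monom poly_monom)
lemma ev_P: "poly (map_poly of_int [:1,0,1:]) (x::'a::comm_ring_1) = x^2 + 1"
  by (simp add: map_poly_pCons power2_eq_square)
lemma ev_alt: "degree R \<le> m \<Longrightarrow> poly (map_poly of_int R) (x::'a::comm_ring_1) = (\<Sum>i\<le>m. of_int (coeff R i) * x^i)"
proof -
  assume d: "degree R \<le> m"
  let ?M = "map_poly (of_int::int\<Rightarrow>'a) R"
  have dm: "degree ?M \<le> m" by (rule le_trans[OF map_poly_degree_leq d])
  have "poly ?M x = (\<Sum>i\<le>degree ?M. coeff ?M i * x^i)"
    by (simp add: poly_altdef)
  also have "\<dots> = (\<Sum>i\<le>m. coeff ?M i * x^i)"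
    using dm by (intro sum.mono_neutral_left) (auto simp: coeff_eq_0)
  also have "\<dots> = (\<Sum>i\<le>m. of_int (coeff R i) * x^i)"
    by (simp add: coeff_map_poly)
  finally show ?thesis .
qed

lemma ev_Sp:
  assumes "degree R \<le> m" "(x::'a::field_char_0) \<noteq> 0"
  shows "poly (map_poly of_int (Sp m R)) x = x^m * poly (map_poly of_int R) (x + 1/x)"
proof -
  have "poly (map_poly of_int (Sp m R)) x = (\<Sum>i\<le>m. of_int (coeff R i) * ((x^2+1)^i * x^(m-i)))"
    unfolding Sp_def ev_sum ev_smult ev_mult ev_power ev_P ev_monom by simp
  also have "\<dots> = (\<Sum>i\<le>m. x^m * (of_int (coeff R i) * (x + 1/x)^i))"
  proof (rule sum.cong)
    fix i assume "i \<in> {..m}"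
    hence im: "i \<le> m" by simp
    have "x^2 + 1 = x * (x + 1/x)" using assms(2) by (simp add: field_simps power2_eq_square)
    hence "(x^2+1)^i * x^(m-i) = (x + 1/x)^i * (x^i * x^(m-i))" by (simp add: power_mult_distrib)
    also have "x^i * x^(m-i) = x^m" using im by (simp flip: power_add)
    finally show "of_int (coeff R i) * ((x^2+1)^i * x^(m-i)) = x^m * (of_int (coeff R i) * (x + 1/x)^i)"
      by simp
  qed simp
  also have "\<dots> = x^m * poly (map_poly of_int R) (x + 1/x)"
    by (simp add: ev_alt[OF assms(1)] sum_distrib_left)
  finally show ?thesis .
qed



lemma mp_inj: "map_poly (of_int::int\<Rightarrow>real) f = map_poly of_int g \<Longrightarrow> f = g"
proof (rule poly_eqI)
  fix n assume "map_poly (of_int::int\<Rightarrow>real) f = map_poly of_int g"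
  hence "coeff (map_poly (of_int::int\<Rightarrow>real) f) n = coeff (map_poly of_int g) n" by simp
  thus "coeff f n = coeff g n" by (simp add: coeff_map_poly)
qed

lemma ext_nz:
  assumes "\<And>x::real. x \<noteq> 0 \<Longrightarrow> poly (map_poly of_int f) x = poly (map_poly of_int g) x"
  shows "f = g"
proof -
  let ?D = "map_poly (of_int::int\<Rightarrow>real) f - map_poly of_int g"
  have "\<forall>x. poly ([:0,1:] * ?D) x = 0"
  proof
    fix x :: real
    show "poly ([:0,1:] * ?D) x = 0"
    proof (cases "x = 0")
      case True thus ?thesis by simp
    next
      case False
      hence "poly ?D x = 0" using assms[OF False] by simp
      thus ?thesis by simp
    qed
  qed
  hence "[:0,1:] * ?D = 0" by (simp only: poly_all_0_iff_0)
  hence "?D = 0" by simp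
  thus ?thesis by (intro mp_inj) simp
qed

lemma solve_t:
  assumes "(t::real) \<ge> 2" shows "\<exists>x. x \<noteq> 0 \<and> x + 1/x = t"
proof -
  define s where "s = sqrt (t^2 - 4)"
  have "2*2 \<le> t*t" by (rule mult_mono) (use assms in auto)
  hence t2: "t^2 \<ge> 4" by (simp add: power2_eq_square)
  have s2: "s^2 = t^2 - 4" unfolding s_def by (rule real_sqrt_pow2) (use t2 in linarith)
  have s0: "s \<ge> 0" unfolding s_def using t2 by simp
  define x where "x = (t + s)/2"
  have x0: "x > 0" unfolding x_def using assms s0 by simp
  have "x * x + 1 = t * x" unfolding x_def using s2 by (simp add: field_simps power2_eq_square)
  hence "x + 1/x = t" using x0 by (simp add: field_simps)
  thus ?thesis using x0 by (intro exI[of _ x]) auto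
qed

lemma Sp_inj:
  assumes "degree R \<le> m" "degree T \<le> m" "Sp m R = Sp m T"
  shows "R = T"
proof -
  let ?D = "map_poly (of_int::int\<Rightarrow>real) R - map_poly of_int T"
  have sub: "{2<..<3} \<subseteq> {t. poly ?D t = 0}"
  proof
    fix t :: real assume "t \<in> {2<..<3}"
    hence "t \<ge> 2" by simp
    then obtain x where x: "x \<noteq> 0" "x + 1/x = t" using solve_t by blast
    have "poly (map_poly of_int (Sp m R)) x = poly (map_poly of_int (Sp m T)) x" using assms(3) by (rule arg_cong)
    hence "x^m * poly (map_poly of_int R) (x + 1/x) = x^m * poly (map_poly of_int T) (x + 1/x)"
      by (simp only: ev_Sp[OF assms(1) x(1)] ev_Sp[OF assms(2) x(1)])
    hence "poly (map_poly of_int R) t = poly (map_poly of_int T) t" using x by simp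
    thus "t \<in> {t. poly ?D t = 0}" by simp
  qed
  have "?D = 0"
  proof (rule ccontr)
    assume "?D \<noteq> 0"
    hence "finite {t. poly ?D t = 0}" by (rule poly_roots_finite)
    hence "finite {2<..<3::real}" using sub by (rule finite_subset[rotated])
    thus False using infinite_Ioo[of "2::real" 3] by simp
  qed
  thus ?thesis by (intro mp_inj) simp
qed

lemma Sp_mult:
  assumes "degree R \<le> m" "degree T \<le> n"
  shows "Sp m R * Sp n T = Sp (m+n) (R*T)"
proof (rule ext_nz)
  fix x :: real assume x: "x \<noteq> 0"
  have d: "degree (R*T) \<le> m + n" using assms degree_mult_le[of R T] by linarith
  show "poly (map_poly of_int (Sp m R * Sp n T)) x = poly (map_poly of_int (Sp (m+n) (R*T))) x"
    unfolding ev_mult ev_Sp[OF assms(1) x] ev_Sp[OF assms(2) x] ev_Sp[OF d x]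
    by (simp add: power_add ev_mult)
qed


definition pal :: "nat \<Rightarrow> int poly \<Rightarrow> bool" where
  "pal m G \<longleftrightarrow> degree G \<le> 2*m \<and> (\<forall>i\<le>2*m. coeff G i = coeff G (2*m - i))"

lemma reflect_P: "reflect_poly [:1,0,1::int:] = [:1,0,1:]"
  by (rule poly_eqI) (simp add: coeff_reflect_poly coeff_pCons split: nat.split)

lemma degree_Pm: "degree ([:1,0,1::int:]^m) = 2*m"
  by (subst degree_power_eq) auto

lemma pal_P: "pal m ([:1,0,1::int:]^m)"
  unfolding pal_def
proof (intro conjI allI impI)
  show "degree ([:1,0,1::int:]^m) \<le> 2*m" by (simp add: degree_Pm)
  fix i assume i: "i \<le> 2*m"
  have "coeff ([:1,0,1::int:]^m) i = coeff (reflect_poly ([:1,0,1::int:]^m)) i"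
    by (simp only: reflect_poly_power reflect_P)
  also have "\<dots> = coeff ([:1,0,1::int:]^m) (2*m - i)"
    using i by (simp only: coeff_reflect_poly degree_Pm) simp
  finally show "coeff ([:1,0,1::int:]^m) i = coeff ([:1,0,1::int:]^m) (2*m - i)" .
qed


lemma pal_repr: "pal m G \<Longrightarrow> \<exists>R. degree R \<le> m \<and> G = Sp m R"
proof (induction m arbitrary: G)
  case 0
  hence d: "degree G = 0" by (simp add: pal_def)
  have "G = [:coeff G 0:]"
    by (rule poly_eqI) (use d in \<open>auto simp: coeff_pCons coeff_eq_0 split: nat.split\<close>)
  hence "G = Sp 0 G" by (simp add: Sp_def)
  thus ?case using d by auto
next
  case (Suc m)
  define P where "P = [:1,0,1::int:]^(Suc m)"
  define c where "c = coeff G 0"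
  define G1 where "G1 = G - smult c P"
  have palP: "pal (Suc m) P" unfolding P_def by (rule pal_P)
  have palG1: "pal (Suc m) G1"
    unfolding pal_def
  proof (intro conjI allI impI)
    have "degree G \<le> 2 * Suc m" using Suc.prems unfolding pal_def by blast
    moreover have "degree (smult c P) \<le> 2 * Suc m"
      using degree_smult_le[of c P] palP unfolding pal_def by linarith
    ultimately show "degree G1 \<le> 2 * Suc m" unfolding G1_def
      using degree_diff_le by blast
  next
    fix i assume i: "i \<le> 2 * Suc m"
    have "coeff G i = coeff G (2 * Suc m - i)" using Suc.prems i unfolding pal_def by blast
    moreover have "coeff P i = coeff P (2 * Suc m - i)" using palP i unfolding pal_def by blast
    ultimately show "coeff G1 i = coeff G1 (2 * Suc m - i)" unfolding G1_def by simp
  qed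
  have P0: "coeff P 0 = 1" unfolding P_def by (simp add: coeff_0_power)
  have G10: "coeff G1 0 = 0" unfolding G1_def c_def by (simp add: P0)
  have G1top: "coeff G1 (2 * Suc m) = 0" using palG1 G10 unfolding pal_def by (metis diff_self_eq_0 order_refl)
  obtain a G2 where G1eq: "G1 = pCons a G2" by (cases G1) auto
  have a0: "a = 0" using G10 G1eq by simp
  have cG2: "coeff G2 i = coeff G1 (Suc i)" for i using G1eq by simp
  have palG2: "pal m G2"
    unfolding pal_def
  proof (intro conjI allI impI)
    show "degree G2 \<le> 2*m"
    proof (rule degree_le, intro allI impI)
      fix i assume "2*m < i"
      hence "Suc i = 2 * Suc m \<or> Suc i > 2 * Suc m" by auto
      thus "coeff G2 i = 0"
      proof
        assume "Suc i = 2 * Suc m" thus ?thesis using cG2 G1top by simp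
      next
        assume "Suc i > 2 * Suc m"
        hence "Suc i > degree G1" using palG1 unfolding pal_def by linarith
        thus ?thesis using cG2 coeff_eq_0 by metis
      qed
    qed
  next
    fix i assume i: "i \<le> 2*m"
    have si: "Suc i \<le> 2 * Suc m" using i by simp
    have "coeff G1 (Suc i) = coeff G1 (2 * Suc m - Suc i)" using palG1 si unfolding pal_def by blast
    hence "coeff G2 i = coeff G1 (2 * Suc m - Suc i)" using cG2 by simp
    also have "2 * Suc m - Suc i = Suc (2*m - i)" using i by simp
    finally show "coeff G2 i = coeff G2 (2*m - i)" using cG2 by simp
  qed
  obtain R2 where R2: "degree R2 \<le> m" "G2 = Sp m R2" using Suc.IH[OF palG2] by blast
  define R where "R = R2 + monom c (Suc m)"
  have dR: "degree R \<le> Suc m" unfolding R_def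
    using R2(1) degree_monom_le[of c "Suc m"] by (intro degree_add_le) auto
  have "G = Sp (Suc m) R"
  proof (rule ext_nz)
    fix x :: real assume x: "x \<noteq> 0"
    have Ga: "G = G1 + smult c P" unfolding G1_def by simp
    have Gb: "G1 = [:0,1:] * G2" using G1eq a0 by simp
    have GG: "G = smult c P + [:0,1:] * G2" unfolding Ga Gb by (rule add.commute)
    have e1: "x^2 + 1 = x * (x + 1/x)" using x by (simp add: distrib_left power2_eq_square)
    have eX: "poly (map_poly (of_int::int\<Rightarrow>real) [:0,1:]) x = x" by (simp add: map_poly_pCons)
    have "poly (map_poly of_int G) x = of_int c * (x^2+1)^(Suc m) + x * poly (map_poly of_int G2) x"
      unfolding GG ev_add ev_smult ev_mult eX P_def ev_power ev_P ..
    also have "\<dots> = x^(Suc m) * (of_int c * (x + 1/x)^(Suc m) + poly (map_poly of_int R2) (x + 1/x))"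
    proof -
      have h1: "(x^2+1)^(Suc m) = x^(Suc m) * (x + 1/x)^(Suc m)" unfolding e1 by (rule power_mult_distrib)
      have h2: "x * (x^m * poly (map_poly of_int R2) (x + 1/x)) = x^(Suc m) * poly (map_poly of_int R2) (x + 1/x)"
        by simp
      show ?thesis unfolding R2(2) ev_Sp[OF R2(1) x] h1 h2 by (simp only: distrib_left mult.assoc mult.left_commute)
    qed
    also have "\<dots> = poly (map_poly of_int (Sp (Suc m) R)) x"
      unfolding ev_Sp[OF dR x] unfolding R_def ev_add ev_monom by (simp only: add.commute)
    finally show "poly (map_poly of_int G) x = poly (map_poly of_int (Sp (Suc m) R)) x" .
  qed
  thus ?case using dR by blast
qed




lemma sympl_pal:
  assumes "symplectic_poly G"
  shows "\<exists>m. degree G = 2*m \<and> pal m G"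
proof -
  obtain m where m: "degree G = 2*m" using assms unfolding symplectic_poly_def by (auto elim: evenE)
  have r: "reflect_poly G = G" using assms unfolding symplectic_poly_def by simp
  have "pal m G" unfolding pal_def
  proof (intro conjI allI impI)
    show "degree G \<le> 2*m" using m by simp
    fix i assume i: "i \<le> 2*m"
    have "coeff G i = coeff (reflect_poly G) i" using r by simp
    also have "\<dots> = coeff G (2*m - i)" using i m by (simp add: coeff_reflect_poly)
    finally show "coeff G i = coeff G (2*m - i)" .
  qed
  thus ?thesis using m by blast
qed

lemma eis:
  fixes p :: int and Q R T :: "int poly"
  assumes p: "prime p" and Q: "Q = R * T" and dR: "degree R > 0" and dT: "degree T > 0"
    and lR: "\<not> p dvd lead_coeff R" and lT: "\<not> p dvd lead_coeff T"
    and low: "\<forall>i<degree Q. p dvd coeff Q i" and c0: "\<not> p^2 dvd coeff Q 0"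
  shows False
proof -
  have R0: "R \<noteq> 0" and T0: "T \<noteq> 0" using dR dT by auto
  define i where "i = (LEAST k. \<not> p dvd coeff R k)"
  define j where "j = (LEAST k. \<not> p dvd coeff T k)"
  have ni: "\<not> p dvd coeff R i" unfolding i_def by (rule LeastI[of _ "degree R"]) (use lR in auto)
  have nj: "\<not> p dvd coeff T j" unfolding j_def by (rule LeastI[of _ "degree T"]) (use lT in auto)
  have iR: "i \<le> degree R" unfolding i_def by (rule Least_le) (use lR in auto)
  have jT: "j \<le> degree T" unfolding j_def by (rule Least_le) (use lT in auto)
  have bi: "k < i \<Longrightarrow> p dvd coeff R k" for k unfolding i_def using not_less_Least by blast
  have bj: "k < j \<Longrightarrow> p dvd coeff T k" for k unfolding j_def using not_less_Least by blast
  have dQ: "degree Q = degree R + degree T" using Q R0 T0 by (simp add: degree_mult_eq)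
  have split: "coeff Q (i+j) = coeff R i * coeff T j + (\<Sum>k\<in>{..i+j}-{i}. coeff R k * coeff T (i+j-k))"
    unfolding Q coeff_mult by (subst sum.remove[of _ i]) auto
  have rest: "p dvd (\<Sum>k\<in>{..i+j}-{i}. coeff R k * coeff T (i+j-k))"
  proof (rule dvd_sum)
    fix k assume k: "k \<in> {..i+j}-{i}"
    show "p dvd coeff R k * coeff T (i+j-k)"
    proof (cases "k < i")
      case True thus ?thesis using bi by auto
    next
      case False hence "i+j-k < j" using k by auto
      thus ?thesis using bj by auto
    qed
  qed
  have "\<not> p dvd coeff R i * coeff T j" using ni nj p by (simp add: prime_dvd_mult_iff)
  hence "\<not> p dvd coeff Q (i+j)" using split rest by (metis dvd_add_left_iff)
  hence "\<not> i + j < degree Q" using low by blast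
  hence ii: "i = degree R" and jj: "j = degree T" using dQ iR jT by auto
  have "p dvd coeff R 0" using bi ii dR by auto
  moreover have "p dvd coeff T 0" using bj jj dT by auto
  ultimately have "p * p dvd coeff R 0 * coeff T 0" by (rule mult_dvd_mono)
  hence "p^2 dvd coeff Q 0" unfolding Q by (simp add: power2_eq_square coeff_mult)
  thus False using c0 by simp
qed

lemma Sp_top:
  assumes "degree R \<le> m" "coeff R m = 1"
  shows "degree (Sp m R) = 2*m" "coeff (Sp m R) (2*m) = 1"
proof -
  define A where "A = (\<Sum>i<m. smult (coeff R i) ([:1, 0, 1:] ^ i * monom 1 (m - i)))"
  have eq: "Sp m R = [:1,0,1:]^m + A"
    unfolding Sp_def A_def lessThan_Suc_atMost[symmetric] sum.lessThan_Suc using assms(2) by simp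
  have dA: "degree A < 2*m \<or> A = 0"
  proof (cases "m = 0")
    case True thus ?thesis by (simp add: A_def)
  next
    case False
    have "degree A \<le> 2*m - 1" unfolding A_def
    proof (rule degree_sum_le)
      fix i assume "i \<in> {..<m}"
      hence i: "i < m" by simp
      have "degree (smult (coeff R i) ([:1, 0, 1:] ^ i * monom 1 (m - i))) \<le> degree ([:1, 0, 1::int:] ^ i * monom 1 (m - i))"
        by (rule degree_smult_le)
      also have "\<dots> \<le> 2*i + (m-i)" using degree_mult_le[of "[:1, 0, 1::int:] ^ i" "monom 1 (m - i)"] degree_monom_le[of "1::int" "m-i"]
        by (simp add: degree_Pm)
      finally show "degree (smult (coeff R i) ([:1, 0, 1:] ^ i * monom 1 (m - i))) \<le> 2*m - 1" using i by linarith
    qed simp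
    thus ?thesis using False by auto
  qed
  have dP: "degree ([:1,0,1::int:]^m) = 2*m" by (rule degree_Pm)
  have cP: "coeff ([:1,0,1::int:]^m) (2*m) = 1"
    using lead_coeff_power[of "[:1,0,1::int:]" m] dP by simp
  have cA: "coeff A (2*m) = 0"
    using dA by (auto intro: coeff_eq_0)
  show "degree (Sp m R) = 2*m"
    using dA proof
    assume "degree A < 2*m" thus ?thesis unfolding eq by (subst degree_add_eq_left) (auto simp: dP)
  next
    assume "A = 0" thus ?thesis unfolding eq by (simp add: dP)
  qed
  show "coeff (Sp m R) (2*m) = 1" unfolding eq using cP cA by simp
qed

lemma mp_reflect: "map_poly (of_int::int\<Rightarrow>real) (reflect_poly f) = reflect_poly (map_poly of_int f)"
  by (rule poly_eqI) (simp add: coeff_reflect_poly coeff_map_poly degree_map_poly)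

lemma Sp_sympl:
  assumes "degree R = m" "coeff R m = 1"
  shows "symplectic_poly (Sp m R)"
proof -
  have d: "degree (Sp m R) = 2*m" and c: "coeff (Sp m R) (2*m) = 1" using Sp_top[of R m] assms by auto
  have "reflect_poly (Sp m R) = Sp m R"
  proof (rule ext_nz)
    fix x :: real assume x: "x \<noteq> 0"
    have x': "inverse x \<noteq> 0" using x by simp
    have dm: "degree R \<le> m" using assms by simp
    have "poly (map_poly of_int (reflect_poly (Sp m R))) x = x^(2*m) * poly (map_poly of_int (Sp m R)) (inverse x)"
    proof -
      have dmap: "degree (map_poly (of_int::int\<Rightarrow>real) (Sp m R)) = 2*m"
        using d by (subst degree_map_poly) auto
      show ?thesis unfolding mp_reflect poly_reflect_poly_nz[OF x] dmap ..
    qed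
    also have "\<dots> = x^(2*m) * ((inverse x)^m * poly (map_poly of_int R) (inverse x + 1 / inverse x))"
      by (simp only: ev_Sp[OF dm x'])
    also have "inverse x + 1 / inverse x = x + 1/x" by (simp add: field_simps)
    also have "x^(2*m) * ((inverse x)^m * poly (map_poly of_int R) (x + 1/x)) = (x^(2*m) * (inverse x)^m) * poly (map_poly of_int R) (x + 1/x)"
      by (simp only: mult.assoc)
    also have "x^(2*m) * (inverse x)^m = x^m"
    proof -
      have "x^(2*m) * (inverse x)^m = x^m * (x * inverse x)^m" by (simp only: mult_2 power_add power_mult_distrib mult.assoc)
      thus ?thesis using x by simp
    qed
    also have "x^m * poly (map_poly of_int R) (x + 1/x) = poly (map_poly of_int (Sp m R)) x"
      by (simp only: ev_Sp[OF dm x])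
    finally show "poly (map_poly of_int (reflect_poly (Sp m R))) x = poly (map_poly of_int (Sp m R)) x" .
  qed
  thus ?thesis unfolding symplectic_poly_def using d c by simp
qed



lemma coeff1_pderiv: "coeff (f::int poly) 1 = poly (pderiv f) 0"
  by (simp add: poly_0_coeff_0 coeff_pderiv)

lemma coeff_P_pow_1: "coeff ([:1,0,1::int:]^i) 1 = 0"
proof (cases i)
  case 0 thus ?thesis by simp
next
  case (Suc j)
  have "poly (pderiv [:1,0,1::int:]) 0 = 0" by (simp add: pderiv_pCons)
  thus ?thesis unfolding coeff1_pderiv Suc pderiv_power_Suc poly_mult by simp
qed

lemma coeff_Sp_1:
  assumes "m \<ge> 1" shows "coeff (Sp m R) 1 = coeff R (m-1)"
proof -
  have t: "coeff ([:1,0,1::int:]^i * monom 1 (m-i)) 1 = (if i = m - 1 then 1 else 0)" if i: "i \<le> m" for i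
  proof -
    have "coeff ([:1,0,1::int:]^i * monom 1 (m-i)) 1 = (if 1 < m - i then 0 else coeff ([:1,0,1::int:]^i) (1 - (m-i)))"
      by (simp only: mult.commute[of _ "monom 1 (m-i)"] coeff_monom_mult) simp
    also have "\<dots> = (if i = m - 1 then 1 else 0)"
    proof -
      consider "m - i \<ge> 2" | "m - i = 1" | "m - i = 0" by linarith
      thus ?thesis
      proof cases
        case 1 thus ?thesis using assms by auto
      next
        case 2 hence "i = m - 1" by simp
        thus ?thesis using 2 by (simp add: coeff_0_power)
      next
        case 3 hence "i = m" using i by simp
        thus ?thesis using 3 assms coeff_P_pow_1[of m] coeff_P_pow_1[of m, unfolded One_nat_def] by simp
      qed
    qed
    finally show ?thesis .
  qed
  have "coeff (Sp m R) 1 = (\<Sum>i\<le>m. coeff R i * coeff ([:1,0,1::int:]^i * monom 1 (m-i)) 1)"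
    unfolding Sp_def coeff_sum coeff_smult ..
  also have "\<dots> = (\<Sum>i\<le>m. (if i = m - 1 then coeff R i else 0))"
  proof (rule sum.cong)
    fix i assume "i \<in> {..m}"
    hence "i \<le> m" by simp
    thus "coeff R i * coeff ([:1,0,1::int:]^i * monom 1 (m-i)) 1 = (if i = m - 1 then coeff R i else 0)"
      by (simp only: t) simp
  qed simp
  also have "\<dots> = coeff R (m-1)" by (subst sum.delta) auto
  finally show ?thesis .
qed

lemma coeff_pcomp_1:
  assumes "k > 1" shows "coeff (pcompose h (monom 1 k)) 1 = (0::int)"
  unfolding coeff1_pderiv pderiv_pcompose poly_mult pderiv_monom using assms
  by (simp add: poly_monom)

lemma lin_mult: "[:-c,1:] * Q = pCons 0 Q - smult c (Q::'a::comm_ring_1 poly)"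
  by simp

lemma prod_lin:
  fixes r :: "nat \<Rightarrow> 'a::comm_ring_1"
  shows "coeff (\<Prod>i<n. [:-r i, 1:]) n = 1 \<and> degree (\<Prod>i<n. [:-r i, 1:]) \<le> n \<and>
         (n \<ge> 1 \<longrightarrow> coeff (\<Prod>i<n. [:-r i, 1:]) (n-1) = - (\<Sum>i<n. r i))"
proof (induction n)
  case 0 thus ?case by simp
next
  case (Suc n)
  define Q where "Q = (\<Prod>i<n. [:-r i, 1:])"
  have IH: "coeff Q n = 1" "degree Q \<le> n" "n \<ge> 1 \<Longrightarrow> coeff Q (n-1) = - (\<Sum>i<n. r i)"
    using Suc.IH unfolding Q_def by auto
  have eq: "(\<Prod>i<Suc n. [:-r i, 1:]) = pCons 0 Q - smult (r n) Q"
    unfolding prod.lessThan_Suc Q_def[symmetric] by (simp only: mult.commute[of Q] lin_mult)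
  have c1: "coeff Q (Suc n) = 0" using IH(2) by (intro coeff_eq_0) simp
  have "coeff (pCons 0 Q - smult (r n) Q) (Suc n) = 1" using IH(1) c1 by simp
  moreover have "degree (pCons 0 Q - smult (r n) Q) \<le> Suc n"
  proof (rule degree_diff_le)
    show "degree (pCons 0 Q) \<le> Suc n" using IH(2) by (simp add: degree_pCons_eq_if)
    show "degree (smult (r n) Q) \<le> Suc n" using IH(2) degree_smult_le[of "r n" Q] by linarith
  qed
  moreover have "coeff (pCons 0 Q - smult (r n) Q) n = - (\<Sum>i<Suc n. r i)"
  proof (cases n)
    case 0 thus ?thesis using IH(1) by simp
  next
    case (Suc k)
    hence "coeff (pCons 0 Q) n = coeff Q (n-1)" by simp
    thus ?thesis using IH(1) IH(3) Suc by simp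
  qed
  ultimately show ?case unfolding eq by simp
qed

lemma ratmp_one: "map_poly (of_rat::rat\<Rightarrow>'a::field_char_0) 1 = 1"
  by simp

lemma not_cyc:
  fixes q :: "int poly" and g :: nat
  assumes dq: "degree q = g" and lq: "coeff q g = 1" and g1: "g \<ge> 1"
    and big: "\<bar>coeff q (g-1)\<bar> > 2 * int g"
  shows "\<not> cyclotomic_poly (Sp g q)"
proof
  assume "cyclotomic_poly (Sp g q)"
  then obtain n z where n: "n > 0" and zn: "(z::complex)^n = 1"
    and irr: "irreducible (map_poly (of_int :: int \<Rightarrow> rat) (Sp g q))"
    and hz: "poly (map_poly of_int (Sp g q)) z = 0"
    unfolding cyclotomic_poly_def by blast
  define S where "S = Sp g q"
  define F where "F = map_poly (of_int::int\<Rightarrow>rat) S"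
  define U where "U = monom (1::rat) n - 1"
  have FC: "map_poly (of_rat::rat\<Rightarrow>complex) F = map_poly of_int S"
    by (rule poly_eqI) (simp add: F_def coeff_map_poly)
  have UC: "map_poly (of_rat::rat\<Rightarrow>complex) U = monom 1 n - 1"
    by (rule poly_eqI) (simp add: U_def coeff_map_poly of_rat_diff coeff_monom)
  have evU: "poly (monom (1::complex) n - 1) x = x^n - 1" for x
    by (simp add: poly_monom)
  have C1: "y^n = 1" if hy: "poly (map_poly of_int S) y = 0" for y :: complex
  proof (cases "F dvd U")
    case True
    then obtain K where K: "U = F * K" by (elim dvdE)
    have "map_poly (of_rat::rat\<Rightarrow>complex) U = map_poly of_rat F * map_poly of_rat K"
      unfolding K by (rule ratmp_mult)
    hence "poly (monom (1::complex) n - 1) y = poly (map_poly of_int S) y * poly (map_poly of_rat K) y"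
      unfolding UC FC by simp
    thus ?thesis using hy evU by simp
  next
    case False
    have "prime_elem F" using irr unfolding F_def S_def by (simp add: prime_elem_iff_irreducible)
    hence "coprime F U" using False by (rule prime_elem_imp_coprime)
    hence "gcd F U = 1" by simp
    hence "fst (bezout_coefficients F U) * F + snd (bezout_coefficients F U) * U = 1"
      using bezout_coefficients_fst_snd[of F U] by simp
    hence "map_poly (of_rat::rat\<Rightarrow>complex) (fst (bezout_coefficients F U) * F + snd (bezout_coefficients F U) * U) = 1"
      by simp
    hence "map_poly of_rat (fst (bezout_coefficients F U)) * map_poly of_int S + map_poly of_rat (snd (bezout_coefficients F U)) * (monom 1 n - 1) = (1 :: complex poly)"
      unfolding ratmp_add ratmp_mult FC UC .
    hence "poly (map_poly of_rat (fst (bezout_coefficients F U)) * map_poly of_int S + map_poly of_rat (snd (bezout_coefficients F U)) * (monom 1 n - 1)) z = (1 :: complex)"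
      by simp
    hence "(0::complex) = 1" using hz zn evU[of z] unfolding S_def by simp
    thus ?thesis by simp
  qed
  define Qc where "Qc = map_poly (of_int::int\<Rightarrow>complex) q"
  have dQc: "degree Qc = g" unfolding Qc_def dq[symmetric] by (rule degree_map_poly) simp
  have lQc: "lead_coeff Qc = 1" using dQc lq unfolding Qc_def by (simp add: coeff_map_poly)
  obtain root where root: "smult (lead_coeff Qc) (\<Prod>i<degree Qc. [:-root i, 1:]) = Qc"
    by (rule complex_poly_decompose')
  hence Qeq: "Qc = (\<Prod>i<g. [:-root i, 1:])" using dQc lQc by simp
  have bound: "norm (root i) \<le> 2" if i: "i < g" for i
  proof -
    define w where "w = root i"
    have "poly Qc w = 0" unfolding Qeq w_def poly_prod using i by (auto intro: prod_zero)
    define s where "s = csqrt (w^2 - 4)"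
    define y where "y = (w + s) / 2"
    have s2: "s^2 = w^2 - 4" unfolding s_def by simp
    have "4 * (y*y - w*y + 1) = s^2 - (w^2 - 4)" unfolding y_def by (simp add: field_simps power2_eq_square)
    hence "4 * (y*y - w*y + 1) = 0" using s2 by simp
    hence h0: "y*y - w*y + 1 = 0" by (metis mult_eq_0_iff zero_neq_numeral)
    have "y*y + 1 = (y*y - w*y + 1) + w*y" by (simp add: algebra_simps)
    hence yy: "y*y + 1 = w*y" using h0 by simp
    have y0: "y \<noteq> 0" using yy by auto
    have yw: "y + 1/y = w" using yy y0 by (simp add: field_simps)
    have dq': "degree q \<le> g" using dq by simp
    have "poly (map_poly of_int S) y = y^g * poly Qc (y + 1/y)"
      unfolding S_def Qc_def by (rule ev_Sp[OF dq' y0])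
    also have "\<dots> = 0" using yw \<open>poly Qc w = 0\<close> by simp
    finally have "y^n = 1" by (rule C1)
    hence ye: "norm y ^ n = 1 ^ n" by (simp add: norm_power[symmetric])
    have ny: "norm y = 1" using power_eq_imp_eq_base[OF ye] n by simp
    have "norm w \<le> norm y + norm (1/y)" unfolding yw[symmetric] by (rule norm_triangle_ineq)
    also have "\<dots> = 2" using ny by (simp add: norm_divide)
    finally show ?thesis unfolding w_def .
  qed
  have "coeff Qc (g-1) = - (\<Sum>i<g. root i)" unfolding Qeq using prod_lin[of root g] g1 by simp
  hence "norm (of_int (coeff q (g-1)) :: complex) = norm (\<Sum>i<g. root i)"
    unfolding Qc_def by (simp add: coeff_map_poly)
  also have "\<dots> \<le> (\<Sum>i<g. norm (root i))" by (rule norm_sum)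
  also have "\<dots> \<le> (\<Sum>i<g. 2)" by (rule sum_mono) (use bound in auto)
  finally have "\<bar>real_of_int (coeff q (g-1))\<bar> \<le> 2 * real g" by simp
  hence "\<bar>coeff q (g-1)\<bar> \<le> 2 * int g" by linarith
  thus False using big by simp
qed



theorem proposition3p5:
  fixes p :: int and g :: nat and a :: "nat \<Rightarrow> int" and q :: "int poly"
  assumes "prime p" and "g \<ge> 1"
    and "\<bar>a (g - 1) * p\<bar> > 2 * int g"
    and "\<not> p dvd a 0"
    and "q = monom 1 g + (\<Sum>i<g. monom (a i * p) i)"
  shows "symp_irreducible (sym_poly q) \<and> \<not> cyclotomic_poly (sym_poly q) \<and>
         \<not> (\<exists>k::nat. k > 1 \<and> (\<exists>h. sym_poly q = pcompose h (monom 1 k)))"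
proof -
  have p0: "p \<noteq> 0" using assms(1) by auto
  have cq: "coeff q i = (if i = g then 1 else if i < g then a i * p else 0)" for i
  proof -
    have "coeff q i = (if g = i then 1 else 0) + (\<Sum>j<g. if j = i then a j * p else 0)"
      unfolding assms(5) by (simp only: coeff_add coeff_sum coeff_monom)
    also have "(\<Sum>j<g. if j = i then a j * p else 0) = (if i \<in> {..<g} then a i * p else 0)"
      by (rule sum.delta) simp
    finally show ?thesis by auto
  qed
  have lq: "coeff q g = 1" using cq by simp
  have dq: "degree q = g"
  proof (rule antisym)
    show "degree q \<le> g" by (rule degree_le) (simp add: cq)
    show "g \<le> degree q" by (rule le_degree) (simp add: lq)
  qed
  have S: "sym_poly q = Sp g q" using sym_poly_Sp dq by simp
  have cg1: "coeff q (g-1) = a (g-1) * p" using cq assms(2) by simp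
  have big: "\<bar>coeff q (g-1)\<bar> > 2 * int g" using cg1 assms(3) by simp
  have sy: "symplectic_poly (Sp g q)" by (rule Sp_sympl[OF dq lq])
  have dS: "degree (Sp g q) = 2*g" using Sp_top[of q g] dq lq by simp
  have nofact: "\<not> (\<exists>G H. symplectic_poly G \<and> symplectic_poly H \<and> degree G > 0 \<and> degree H > 0 \<and> Sp g q = G * H)"
  proof
    assume "\<exists>G H. symplectic_poly G \<and> symplectic_poly H \<and> degree G > 0 \<and> degree H > 0 \<and> Sp g q = G * H"
    then obtain G H where G: "symplectic_poly G" and H: "symplectic_poly H" and dG: "degree G > 0"
      and dH: "degree H > 0" and GH: "Sp g q = G * H" by blast
    obtain m where m: "degree G = 2*m" "pal m G" using sympl_pal[OF G] by blast
    obtain m' where m': "degree H = 2*m'" "pal m' H" using sympl_pal[OF H] by blast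
    obtain R where R: "degree R \<le> m" "G = Sp m R" using pal_repr[OF m(2)] by blast
    obtain T where T: "degree T \<le> m'" "H = Sp m' T" using pal_repr[OF m'(2)] by blast
    have G0: "G \<noteq> 0" and H0: "H \<noteq> 0" using dG dH by auto
    have "degree (G*H) = 2*m + 2*m'" using G0 H0 m m' by (simp add: degree_mult_eq)
    hence mm: "m + m' = g" using GH dS by simp
    have "G * H = Sp (m+m') (R*T)" unfolding R(2) T(2) by (rule Sp_mult[OF R(1) T(1)])
    hence eq: "Sp g q = Sp g (R*T)" using GH mm by simp
    have dRT: "degree (R*T) \<le> g" using degree_mult_le[of R T] R(1) T(1) mm by linarith
    have qRT: "q = R * T" using Sp_inj[OF _ dRT eq] dq by simp
    have q0: "q \<noteq> 0" using lq by auto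
    have R0: "R \<noteq> 0" and T0: "T \<noteq> 0" using q0 qRT by auto
    have "degree R + degree T = g" using qRT dq R0 T0 by (simp add: degree_mult_eq)
    hence dR: "degree R = m" and dT: "degree T = m'" using R(1) T(1) mm by auto
    have mpos: "m > 0" using dG m by simp
    have m'pos: "m' > 0" using dH m' by simp
    have "lead_coeff q = lead_coeff R * lead_coeff T" unfolding qRT by (rule lead_coeff_mult)
    hence ll: "lead_coeff R * lead_coeff T = 1" using lq dq by simp
    have nu: "\<not> p dvd 1" using assms(1) not_prime_unit by blast
    have lR: "\<not> p dvd lead_coeff R"
    proof
      assume "p dvd lead_coeff R"
      hence "p dvd lead_coeff R * lead_coeff T" by (rule dvd_mult2)
      thus False using ll nu by simp
    qed
    have lT: "\<not> p dvd lead_coeff T"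
    proof
      assume "p dvd lead_coeff T"
      hence "p dvd lead_coeff R * lead_coeff T" by (rule dvd_mult)
      thus False using ll nu by simp
    qed
    have low: "\<forall>i<degree q. p dvd coeff q i"
    proof (intro allI impI)
      fix i assume "i < degree q"
      hence "coeff q i = a i * p" using dq cq[of i] by simp
      thus "p dvd coeff q i" by simp
    qed
    have c0: "\<not> p^2 dvd coeff q 0"
    proof
      assume "p^2 dvd coeff q 0"
      hence "p * p dvd a 0 * p" using cq assms(2) by (simp add: power2_eq_square)
      hence "p dvd a 0" using p0 by simp
      thus False using assms(4) by simp
    qed
    show False
      by (rule eis[OF assms(1) qRT _ _ lR lT low c0]) (use dR dT mpos m'pos in auto)
  qed
  have A: "symp_irreducible (sym_poly q)"
    unfolding S symp_irreducible_def using sy nofact by blast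
  have B: "\<not> cyclotomic_poly (sym_poly q)"
    unfolding S by (rule not_cyc[OF dq lq assms(2) big])
  have C: "\<not> (\<exists>k::nat. k > 1 \<and> (\<exists>h. sym_poly q = pcompose h (monom 1 k)))"
  proof
    assume "\<exists>k::nat. k > 1 \<and> (\<exists>h. sym_poly q = pcompose h (monom 1 k))"
    then obtain k h where k: "k > 1" and h: "sym_poly q = pcompose h (monom 1 k)" by blast
    have "coeff (sym_poly q) 1 = coeff q (g-1)" unfolding S by (rule coeff_Sp_1[OF assms(2)])
    moreover have "coeff (sym_poly q) 1 = 0" unfolding h by (rule coeff_pcomp_1[OF k])
    ultimately show False using big by simp
  qed
  show ?thesis using A B C by blast
qed


end
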